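(* Let $s\geq 2$ and let $d$ be a positive divisor of $s$. In $G_{(s,0)}$, the subgroup $H=\langle u^d\rangle\rtimes\langle\rho_0\rangle$ is core-free and $|G_{(s,0)}:H|=3ds$. Consequently $G_{(s,0)}$ has a faithful transitive permutation representation of degree $3ds$.
   Context: $G_{(s,0)}$ is the group of the toroidal hypermap $(3,3,3)_{(s,0)}$: the Coxeter group $[3,3,3]=\langle\rho_0,\rho_1,\rho_2\mid \rho_i^2=1,\ (\rho_i\rho_j)^3=1\ (i\neq j)\rangle$ factored by $(\rho_0\rho_1\rho_2\rho_1)^s$; it has order $6s^2$. Here $u=\rho_0\rho_1\rho_2\rho_1$ (a translation of order $s$, with $\rho_0 u\rho_0=u^{-1}$). A subgroup is core-free if it contains no nontrivial normal subgroup of the group. *)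

theory Defs
  imports "HOL-Algebra.Algebra"
begin

datatype gen = R0 | R1 | R2

text \<open>Since all generators are involutions
  (rho_i^2 = 1 is a relator), the group is presented as a monoid on words.\<close>
definition relators :: "nat \<Rightarrow> gen list set" where
  "relators s =
     {[g, g] | g. True}
   \<union> {concat (replicate 3 [g, h]) | g h. g \<noteq> h}
   \<union> {concat (replicate s [R0, R1, R2, R1])}"

inductive wcong :: "nat \<Rightarrow> gen list \<Rightarrow> gen list \<Rightarrow> bool" for s where
  rel: "r \<in> relators s \<Longrightarrow> wcong s r []"
| refl: "wcong s w w"
| sym: "wcong s a b \<Longrightarrow> wcong s b a"
| trans: "wcong s a b \<Longrightarrow> wcong s b c \<Longrightarrow> wcong s a c"
| ctxt: "wcong s a b \<Longrightarrow> wcong s (x @ a @ y) (x @ b @ y)"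

definition elt :: "nat \<Rightarrow> gen list \<Rightarrow> gen list set" where
  "elt s w = {c. wcong s c w}"

definition Gs :: "nat \<Rightarrow> gen list set monoid" where
  "Gs s = \<lparr> carrier = range (elt s),
            monoid.mult = (\<lambda>A B. {c. \<exists>a\<in>A. \<exists>b\<in>B. wcong s c (a @ b)}),
            one = elt s [] \<rparr>"

definition u_elt :: "nat \<Rightarrow> gen list set" where
  "u_elt s = elt s [R0, R1, R2, R1]"

definition core_free :: "('a, 'b) monoid_scheme \<Rightarrow> 'a set \<Rightarrow> bool" where
  "core_free G H \<longleftrightarrow> (\<forall>N. normal N G \<and> N \<subseteq> H \<longrightarrow> N = {\<one>\<^bsub>G\<^esub>})"

definition faithful_transitive_rep :: "('a, 'b) monoid_scheme \<Rightarrow> 'c set \<Rightarrow> bool" where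
  "faithful_transitive_rep G S \<longleftrightarrow>
     (\<exists>f. f \<in> hom G (BijGroup S) \<and> inj_on f (carrier G) \<and>
          (\<forall>x\<in>S. \<forall>y\<in>S. \<exists>g\<in>carrier G. f g x = y))"

end

theory Submission
  imports Defs
begin


lemma wcong_app: "wcong s a a' \<Longrightarrow> wcong s b b' \<Longrightarrow> wcong s (a @ b) (a' @ b')"
proof -
  assume h1: "wcong s a a'" and h2: "wcong s b b'"
  have "wcong s ([] @ a @ b) ([] @ a' @ b)" by (rule wcong.ctxt[OF h1])
  moreover have "wcong s (a' @ b @ []) (a' @ b' @ [])" by (rule wcong.ctxt[OF h2])
  ultimately show ?thesis by (auto intro: wcong.trans)
qed

lemma elt_eq_iff: "elt s a = elt s b \<longleftrightarrow> wcong s a b"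
  unfolding elt_def
  by (auto intro: wcong.refl wcong.sym wcong.trans)

lemma elt_mult: "elt s a \<otimes>\<^bsub>Gs s\<^esub> elt s b = elt s (a @ b)"
  unfolding Gs_def elt_def
  by (auto intro: wcong.refl wcong.trans wcong_app)

lemma Gs_carrier: "carrier (Gs s) = range (elt s)" by (simp add: Gs_def)
lemma Gs_one: "\<one>\<^bsub>Gs s\<^esub> = elt s []" by (simp add: Gs_def)

lemma rel2: "wcong s [g, g] []" by (rule wcong.rel) (auto simp: relators_def)

lemma wcong_rev: "wcong s (rev w @ w) []"
proof (induction w)
  case Nil then show ?case by (simp add: wcong.refl)
  case (Cons g w)
  have "wcong s (rev w @ ([g,g]) @ w) (rev w @ [] @ w)" by (rule wcong.ctxt[OF rel2])
  then show ?case using Cons by (auto intro: wcong.trans)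
qed

lemma group_Gs: "group (Gs s)"
proof (rule groupI)
  fix x y assume "x \<in> carrier (Gs s)" "y \<in> carrier (Gs s)"
  then show "x \<otimes>\<^bsub>Gs s\<^esub> y \<in> carrier (Gs s)" by (auto simp: Gs_carrier elt_mult)
next
  show "\<one>\<^bsub>Gs s\<^esub> \<in> carrier (Gs s)" by (simp add: Gs_carrier Gs_one)
next
  fix x y z assume "x \<in> carrier (Gs s)" "y \<in> carrier (Gs s)" "z \<in> carrier (Gs s)"
  then show "x \<otimes>\<^bsub>Gs s\<^esub> y \<otimes>\<^bsub>Gs s\<^esub> z = x \<otimes>\<^bsub>Gs s\<^esub> (y \<otimes>\<^bsub>Gs s\<^esub> z)"
    by (auto simp: Gs_carrier elt_mult)
next
  fix x assume "x \<in> carrier (Gs s)"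
  then show "\<one>\<^bsub>Gs s\<^esub> \<otimes>\<^bsub>Gs s\<^esub> x = x" by (auto simp: Gs_carrier elt_mult Gs_one)
next
  fix x assume "x \<in> carrier (Gs s)"
  then obtain w where "x = elt s w" by (auto simp: Gs_carrier)
  then show "\<exists>y \<in> carrier (Gs s). y \<otimes>\<^bsub>Gs s\<^esub> x = \<one>\<^bsub>Gs s\<^esub>"
    by (intro bexI[of _ "elt s (rev w)"]) (auto simp: Gs_carrier elt_mult Gs_one elt_eq_iff wcong_rev)
qed


type_synonym pt = "int \<times> int \<times> int"

definition Mo :: "nat \<Rightarrow> pt \<Rightarrow> pt" where
  "Mo s = (\<lambda>(x,y,z). (x mod int s, y mod int s, z mod int s))"

fun F :: "nat \<Rightarrow> gen \<Rightarrow> pt \<Rightarrow> pt" where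
  "F s R0 = (\<lambda>(x,y,z). ((z+1) mod int s, y mod int s, (x-1) mod int s))"
| "F s R1 = (\<lambda>(x,y,z). (y mod int s, x mod int s, z mod int s))"
| "F s R2 = (\<lambda>(x,y,z). (x mod int s, z mod int s, y mod int s))"

definition phi :: "nat \<Rightarrow> gen list \<Rightarrow> pt \<Rightarrow> pt" where
  "phi s w = foldr (\<lambda>g f. F s g \<circ> f) w (Mo s)"

lemma phi_Nil[simp]: "phi s [] = Mo s" by (simp add: phi_def)
lemma phi_Cons[simp]: "phi s (g # w) = F s g \<circ> phi s w" by (simp add: phi_def)

lemma Mo_F: "Mo s \<circ> F s g = F s g"
  by (cases g) (auto simp: Mo_def fun_eq_iff)

lemma Mo_phi: "Mo s \<circ> phi s w = phi s w"
proof (cases w)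
  case Nil then show ?thesis by (auto simp: Mo_def fun_eq_iff)
next
  case (Cons g w') then show ?thesis by (simp add: comp_assoc[symmetric] Mo_F)
qed

lemma phi_append: "phi s (a @ b) = phi s a \<circ> phi s b"
proof (induction a)
  case Nil then show ?case by (simp add: Mo_phi)
next
  case (Cons g a) then show ?case by (simp add: comp_assoc)
qed

lemma phi_rel2: "phi s [g,g] = Mo s"
  by (cases g) (auto simp: fun_eq_iff Mo_def mod_simps)

lemma phi_rel3: "phi s (concat (replicate 3 [g,h])) = Mo s"
  by (cases g; cases h) (auto simp: fun_eq_iff Mo_def mod_simps numeral_3_eq_3)

lemma phi_upow: "phi s (concat (replicate n [R0,R1,R2,R1])) =
   (\<lambda>(x,y,z). ((x + int n) mod int s, y mod int s, (z - int n) mod int s))"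
proof (induction n)
  case 0 then show ?case by (simp add: Mo_def)
next
  case (Suc n) then show ?case by (auto simp: fun_eq_iff mod_simps algebra_simps)
qed

lemma phi_rels: "r \<in> relators s \<Longrightarrow> phi s r = phi s []"
  unfolding relators_def
  using phi_rel2[of s] phi_rel3[of s]
  by (auto simp: phi_upow Mo_def mod_simps simp del: phi_Cons)

lemma phi_wcong: "wcong s a b \<Longrightarrow> phi s a = phi s b"
  by (induction rule: wcong.induct) (auto simp: phi_rels phi_append)


declare wcong.trans[trans]

lemma ctx: "wcong s a b \<Longrightarrow> wcong s (x @ a @ y) (x @ b @ y)" by (rule wcong.ctxt)

lemma del2: "wcong s (x @ g # g # y) (x @ y)"
  using ctx[OF rel2[of s g], of x y] by simp

lemma rel3: "g \<noteq> h \<Longrightarrow> wcong s [g,h,g,h,g,h] []"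
  by (rule wcong.rel) (auto simp: relators_def numeral_3_eq_3 intro!: exI[of _ g] exI[of _ h])

lemma braid0: "g \<noteq> h \<Longrightarrow> wcong s [h,g,h] [g,h,g]"
proof -
  assume gh: "g \<noteq> h"
  have "wcong s ([] @ [] @ [h,g,h]) ([] @ [g,h,g,h,g,h] @ [h,g,h])"
    by (rule ctx, rule wcong.sym, rule rel3[OF gh])
  then have "wcong s [h,g,h] [g,h,g,h,g,h,h,g,h]" by simp
  also have "wcong s [g,h,g,h,g,h,h,g,h] [g,h,g,h,g,g,h]" using del2[of s "[g,h,g,h,g]" h "[g,h]"] by simp
  also have "wcong s [g,h,g,h,g,g,h] [g,h,g,h,h]" using del2[of s "[g,h,g,h]" g "[h]"] by simp
  also have "wcong s [g,h,g,h,h] [g,h,g]" using del2[of s "[g,h,g]" h "[]"] by simp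
  finally show ?thesis .
qed

lemma br: "g \<noteq> h \<Longrightarrow> wcong s (x @ g # h # g # y) (x @ h # g # h # y)"
  using ctx[OF wcong.sym[OF braid0], of g h s x y] by simp


lemma (in group) conj_pow:
  assumes g: "g \<in> carrier G" "g \<otimes> g = \<one>" and x: "x \<in> carrier G"
  shows "g \<otimes> x [^] (n::nat) \<otimes> g = (g \<otimes> x \<otimes> g) [^] n"
proof (induction n)
  case 0 then show ?case using g by simp
next
  case (Suc n)
  have "g \<otimes> x [^] Suc n \<otimes> g = (g \<otimes> x [^] n \<otimes> g) \<otimes> (g \<otimes> x \<otimes> g)"
    using g x by (simp add: m_assoc[symmetric]) (simp add: m_assoc)
  then show ?case using Suc g x by simp
qed

lemma (in group) conj_mult:
  assumes g: "g \<in> carrier G" "g \<otimes> g = \<one>" and x: "x \<in> carrier G" and y: "y \<in> carrier G"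
  shows "g \<otimes> (x \<otimes> y) \<otimes> g = (g \<otimes> x \<otimes> g) \<otimes> (g \<otimes> y \<otimes> g)"
  using g x y by (simp add: m_assoc[symmetric]) (simp add: m_assoc)

lemma (in group) pow_comm2:
  assumes "x \<otimes> y = y \<otimes> x" "x \<in> carrier G" "y \<in> carrier G"
  shows "x [^] (n::nat) \<otimes> y [^] (m::nat) = y [^] m \<otimes> x [^] n"
  by (metis assms group_commutes_pow nat_pow_closed)

definition uw :: "gen list" where "uw = [R0,R1,R2,R1]"
definition vw :: "gen list" where "vw = [R1,R0,R1,R2]"

lemma w_uv: "wcong s (uw @ vw) (vw @ uw)"
proof -
  have "wcong s [R0,R1,R2,R1,R1,R0,R1,R2] [R0,R1,R2,R0,R1,R2]" using del2[of s "[R0,R1,R2]" R1 "[R0,R1,R2]"] by simp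
  also have "wcong s [R0,R1,R2,R0,R1,R2] [R1,R1,R0,R1,R2,R0,R1,R2]" using wcong.sym[OF del2[of s "[]" R1 "[R0,R1,R2,R0,R1,R2]"]] by simp
  also have "wcong s [R1,R1,R0,R1,R2,R0,R1,R2] [R1,R0,R1,R0,R2,R0,R1,R2]" using wcong.sym[OF br[of R0 R1 s "[R1]" "[R2,R0,R1,R2]"]] by simp
  also have "wcong s [R1,R0,R1,R0,R2,R0,R1,R2] [R1,R0,R1,R2,R0,R2,R1,R2]" using br[of R2 R0 s "[R1,R0,R1]" "[R1,R2]"] by (auto intro: wcong.sym)
  also have "wcong s [R1,R0,R1,R2,R0,R2,R1,R2] [R1,R0,R1,R2,R0,R1,R2,R1]" using br[of R1 R2 s "[R1,R0,R1,R2,R0]" "[]"] by (auto intro: wcong.sym)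
  finally show ?thesis by (simp add: uw_def vw_def)
qed

lemma w_cuc: "wcong s ([R2] @ uw @ [R2]) (uw @ rev vw)"
proof -
  have "wcong s [R2,R0,R1,R2,R1,R2] [R2,R0,R2,R1,R2,R2]" using br[of R1 R2 s "[R2,R0]" "[R2]"] by simp
  also have "wcong s [R2,R0,R2,R1,R2,R2] [R2,R0,R2,R1]" using del2[of s "[R2,R0,R2,R1]" R2 "[]"] by simp
  also have "wcong s [R2,R0,R2,R1] [R0,R2,R0,R1]" using br[of R2 R0 s "[]" "[R1]"] by simp
  also have "wcong s [R0,R2,R0,R1] [R0,R2,R1,R1,R0,R1]" using wcong.sym[OF del2[of s "[R0,R2]" R1 "[R0,R1]"]] by simp
  also have "wcong s [R0,R2,R1,R1,R0,R1] [R0,R2,R1,R2,R2,R1,R0,R1]" using wcong.sym[OF del2[of s "[R0,R2,R1]" R2 "[R1,R0,R1]"]] by simp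
  also have "wcong s [R0,R2,R1,R2,R2,R1,R0,R1] [R0,R1,R2,R1,R2,R1,R0,R1]" using wcong.sym[OF br[of R1 R2 s "[R0]" "[R2,R1,R0,R1]"]] by simp
  finally show ?thesis by (simp add: uw_def vw_def)
qed

lemma w_cvc: "wcong s ([R2] @ vw @ [R2]) (rev vw)"
  using del2[of s "[R2,R1,R0,R1]" R2 "[]"] by (simp add: vw_def)

lemma w_a: "wcong s [R0] (uw @ [R1,R2,R1])"
proof -
  have "wcong s [R0,R1,R2,R1,R1,R2,R1] [R0,R1,R2,R2,R1]" using del2[of s "[R0,R1,R2]" R1 "[R2,R1]"] by simp
  also have "wcong s [R0,R1,R2,R2,R1] [R0,R1,R1]" using del2[of s "[R0,R1]" R2 "[R1]"] by simp
  also have "wcong s [R0,R1,R1] [R0]" using del2[of s "[R0]" R1 "[]"] by simp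
  finally show ?thesis by (simp add: uw_def wcong.sym)
qed

lemma w_v: "wcong s vw ([R1] @ uw @ [R1])"
  using wcong.sym[OF del2[of s "[R1,R0,R1,R2]" R1 "[]"]] by (simp add: uw_def vw_def)

lemma w_bcbc: "wcong s [R1,R2,R1,R2] [R2,R1]"
proof -
  have "wcong s [R1,R2,R1,R2] [R2,R1,R2,R2]" using br[of R1 R2 s "[]" "[R2]"] by simp
  also have "wcong s [R2,R1,R2,R2] [R2,R1]" using del2[of s "[R2,R1]" R2 "[]"] by simp
  finally show ?thesis .
qed

lemma w_us: "wcong s (concat (replicate s uw)) []"
  by (rule wcong.rel) (simp add: relators_def uw_def)


definition ea :: "nat \<Rightarrow> gen list set" where "ea s = elt s [R0]"
definition eb :: "nat \<Rightarrow> gen list set" where "eb s = elt s [R1]"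
definition ec :: "nat \<Rightarrow> gen list set" where "ec s = elt s [R2]"
definition vv :: "nat \<Rightarrow> gen list set" where "vv s = elt s vw"

definition sw :: "nat \<Rightarrow> gen list" where
  "sw k = [[],[R1],[R2],[R1,R2],[R2,R1],[R1,R2,R1]] ! k"

lemma sw_b: "k < 6 \<Longrightarrow> \<exists>k'<6. wcong s (sw k @ [R1]) (sw k')"
proof -
  assume "k < 6"
  then have "k = 0 \<or> k = 1 \<or> k = 2 \<or> k = 3 \<or> k = 4 \<or> k = 5" by auto
  then show ?thesis
  proof (elim disjE)
    assume "k = 0" then show ?thesis by (intro exI[of _ 1]) (simp add: sw_def wcong.refl)
  next
    assume "k = 1" then show ?thesis using del2[of s "[]" R1 "[]"] by (intro exI[of _ 0]) (simp add: sw_def)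
  next
    assume "k = 2" then show ?thesis by (intro exI[of _ 4]) (simp add: sw_def wcong.refl)
  next
    assume "k = 3" then show ?thesis by (intro exI[of _ 5]) (simp add: sw_def wcong.refl)
  next
    assume "k = 4" then show ?thesis using del2[of s "[R2]" R1 "[]"] by (intro exI[of _ 2]) (simp add: sw_def)
  next
    assume "k = 5" then show ?thesis using del2[of s "[R1,R2]" R1 "[]"] by (intro exI[of _ 3]) (simp add: sw_def)
  qed
qed

lemma sw_c: "k < 6 \<Longrightarrow> \<exists>k'<6. wcong s (sw k @ [R2]) (sw k')"
proof -
  assume "k < 6"
  then have "k = 0 \<or> k = 1 \<or> k = 2 \<or> k = 3 \<or> k = 4 \<or> k = 5" by auto
  then show ?thesis
  proof (elim disjE)
    assume "k = 0" then show ?thesis by (intro exI[of _ 2]) (simp add: sw_def wcong.refl)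
  next
    assume "k = 1" then show ?thesis by (intro exI[of _ 3]) (simp add: sw_def wcong.refl)
  next
    assume "k = 2" then show ?thesis using del2[of s "[]" R2 "[]"] by (intro exI[of _ 0]) (simp add: sw_def)
  next
    assume "k = 3" then show ?thesis using del2[of s "[R1]" R2 "[]"] by (intro exI[of _ 1]) (simp add: sw_def)
  next
    assume "k = 4" then show ?thesis using br[of R2 R1 s "[]" "[]"] by (intro exI[of _ 5]) (simp add: sw_def)
  next
    assume "k = 5" then show ?thesis using w_bcbc[of s] by (intro exI[of _ 4]) (simp add: sw_def)
  qed
qed

definition tt :: "nat \<Rightarrow> nat \<Rightarrow> nat \<Rightarrow> gen list set" where
  "tt s i j = u_elt s [^]\<^bsub>Gs s\<^esub> i \<otimes>\<^bsub>Gs s\<^esub> vv s [^]\<^bsub>Gs s\<^esub> j"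

context fixes s :: nat assumes s2: "2 \<le> s"
begin

interpretation G: group "Gs s" by (rule group_Gs)

abbreviation mulE (infixl "\<diamond>" 70) where "x \<diamond> y \<equiv> x \<otimes>\<^bsub>Gs s\<^esub> y"
abbreviation pwE (infixr "^^^" 75) where "x ^^^ n \<equiv> x [^]\<^bsub>Gs s\<^esub> (n::nat)"

lemma elt_in[simp]: "elt s w \<in> carrier (Gs s)" by (simp add: Gs_carrier)
lemma gens_in[simp]: "ea s \<in> carrier (Gs s)" "eb s \<in> carrier (Gs s)" "ec s \<in> carrier (Gs s)"
  "vv s \<in> carrier (Gs s)" "u_elt s \<in> carrier (Gs s)"
  by (simp_all add: ea_def eb_def ec_def vv_def u_elt_def)

lemma concat_rep_snoc: "concat (replicate n w) @ w = w @ concat (replicate n w)"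
  by (induction n) simp_all

lemma elt_pow: "elt s w ^^^ n = elt s (concat (replicate n w))"
  by (induction n) (simp_all add: Gs_one elt_mult concat_rep_snoc)

lemma inv2: "elt s [g] \<diamond> elt s [g] = \<one>\<^bsub>Gs s\<^esub>"
  by (simp add: elt_mult Gs_one elt_eq_iff rel2)

lemma bb: "eb s \<diamond> eb s = \<one>\<^bsub>Gs s\<^esub>" by (simp add: eb_def inv2)
lemma cc: "ec s \<diamond> ec s = \<one>\<^bsub>Gs s\<^esub>" by (simp add: ec_def inv2)

lemma uv: "u_elt s \<diamond> vv s = vv s \<diamond> u_elt s"
  by (simp add: u_elt_def vv_def elt_mult elt_eq_iff w_uv[unfolded uw_def] del: append.simps)

lemma inv_vv: "inv\<^bsub>Gs s\<^esub> (vv s) = elt s (rev vw)"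
  by (rule G.inv_equality) (simp_all add: vv_def elt_mult Gs_one elt_eq_iff wcong_rev)

lemma cuc: "ec s \<diamond> u_elt s \<diamond> ec s = u_elt s \<diamond> inv\<^bsub>Gs s\<^esub> (vv s)"
  using w_cuc[of s] by (simp add: inv_vv ec_def u_elt_def elt_mult elt_eq_iff uw_def)

lemma cvc: "ec s \<diamond> vv s \<diamond> ec s = inv\<^bsub>Gs s\<^esub> (vv s)"
  using w_cvc[of s] by (simp only: inv_vv, simp add: ec_def vv_def elt_mult elt_eq_iff)

lemma bub: "eb s \<diamond> u_elt s \<diamond> eb s = vv s"
  using w_v[of s] by (simp add: eb_def vv_def u_elt_def elt_mult elt_eq_iff uw_def wcong.sym)

lemma bvb: "eb s \<diamond> vv s \<diamond> eb s = u_elt s"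
proof -
  have "eb s \<diamond> vv s \<diamond> eb s = eb s \<diamond> eb s \<diamond> u_elt s \<diamond> (eb s \<diamond> eb s)"
    by (simp add: bub[symmetric] G.m_assoc)
  then show ?thesis by (simp add: bb)
qed

lemma a_eq: "ea s = u_elt s \<diamond> eb s \<diamond> ec s \<diamond> eb s"
  using w_a[of s] by (simp add: ea_def eb_def ec_def u_elt_def elt_mult elt_eq_iff uw_def)

lemma us: "u_elt s ^^^ s = \<one>\<^bsub>Gs s\<^esub>"
  using w_us[of s] by (simp add: u_elt_def elt_pow Gs_one elt_eq_iff uw_def)

lemma vs: "vv s ^^^ s = \<one>\<^bsub>Gs s\<^esub>"
proof -
  have "vv s ^^^ s = eb s \<diamond> u_elt s ^^^ s \<diamond> eb s"
    by (simp add: G.conj_pow bb bub)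
  then show ?thesis by (simp add: us bb)
qed

lemma pow_mod: "x \<in> carrier (Gs s) \<Longrightarrow> x ^^^ s = \<one>\<^bsub>Gs s\<^esub> \<Longrightarrow> x ^^^ n = x ^^^ (n mod s)"
proof -
  assume x: "x \<in> carrier (Gs s)" and xs: "x ^^^ s = \<one>\<^bsub>Gs s\<^esub>"
  have "x ^^^ n = x ^^^ (s * (n div s)) \<diamond> x ^^^ (n mod s)"
    by (simp add: G.nat_pow_mult x)
  also have "x ^^^ (s * (n div s)) = \<one>\<^bsub>Gs s\<^esub>"
    by (simp add: G.nat_pow_pow[symmetric] x xs)
  finally show ?thesis using x by simp
qed

lemma inv_v_pow: "inv\<^bsub>Gs s\<^esub> (vv s) = vv s ^^^ (s - 1)"
proof (rule G.inv_equality)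
  show "vv s ^^^ (s - 1) \<diamond> vv s = \<one>\<^bsub>Gs s\<^esub>"
    using s2 vs by (simp add: G.nat_pow_Suc[symmetric] del: G.nat_pow_Suc)
qed simp_all


lemma tt_in[simp]: "tt s i j \<in> carrier (Gs s)" by (simp add: tt_def)

lemma tt_u: "tt s i j \<diamond> u_elt s = tt s (Suc i) j"
proof -
  have "tt s i j \<diamond> u_elt s = u_elt s ^^^ i \<diamond> (vv s ^^^ j \<diamond> u_elt s)"
    by (simp add: tt_def G.m_assoc)
  also have "vv s ^^^ j \<diamond> u_elt s = u_elt s \<diamond> vv s ^^^ j"
    by (metis G.group_commutes_pow gens_in(4,5) uv)
  finally show ?thesis by (simp add: tt_def G.m_assoc[symmetric])
qed

lemma tt_b: "eb s \<diamond> tt s i j \<diamond> eb s = tt s j i"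
proof -
  have "eb s \<diamond> tt s i j \<diamond> eb s = (eb s \<diamond> u_elt s ^^^ i \<diamond> eb s) \<diamond> (eb s \<diamond> vv s ^^^ j \<diamond> eb s)"
    unfolding tt_def by (rule G.conj_mult) (simp_all add: bb)
  also have "\<dots> = vv s ^^^ i \<diamond> u_elt s ^^^ j"
    by (simp add: G.conj_pow bb bub bvb)
  also have "\<dots> = tt s j i" by (simp add: tt_def G.pow_comm2 uv)
  finally show ?thesis .
qed

lemma tt_c: "ec s \<diamond> tt s i j \<diamond> ec s = tt s i ((s - 1) * i + (s - 1) * j)"
proof -
  have c1: "u_elt s \<diamond> vv s ^^^ (s-1) = vv s ^^^ (s-1) \<diamond> u_elt s"
    by (metis G.group_commutes_pow gens_in(4,5) uv)
  have "ec s \<diamond> tt s i j \<diamond> ec s = (ec s \<diamond> u_elt s ^^^ i \<diamond> ec s) \<diamond> (ec s \<diamond> vv s ^^^ j \<diamond> ec s)"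
    unfolding tt_def by (rule G.conj_mult) (simp_all add: cc)
  also have "\<dots> = (u_elt s \<diamond> vv s ^^^ (s-1)) ^^^ i \<diamond> (vv s ^^^ (s-1)) ^^^ j"
    by (simp add: G.conj_pow cc cuc cvc inv_v_pow)
  also have "\<dots> = u_elt s ^^^ i \<diamond> vv s ^^^ ((s-1) * i) \<diamond> vv s ^^^ ((s-1) * j)"
    using G.pow_mult_distrib[OF _ _ _, of "u_elt s" "vv s ^^^ (s-1)" i] c1
    by (simp add: G.nat_pow_pow)
  also have "\<dots> = tt s i ((s - 1) * i + (s - 1) * j)"
    by (simp add: tt_def G.m_assoc G.nat_pow_mult)
  finally show ?thesis .
qed

lemma tt_mod: "tt s i j = tt s (i mod s) (j mod s)"
  unfolding tt_def using pow_mod[OF _ us] pow_mod[OF _ vs] by simp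

end


definition sg :: "nat \<Rightarrow> nat \<Rightarrow> gen list set" where "sg s k = elt s (sw k)"

definition Wu :: "nat \<Rightarrow> gen list set set" where "Wu s = {sg s k \<otimes>\<^bsub>Gs s\<^esub> tt s i j | k i j. k < 6}"

context fixes s :: nat assumes s2: "2 \<le> s"
begin

interpretation G: group "Gs s" by (rule group_Gs)

lemmas tt_in_F[simp] = tt_in[OF s2]
lemmas gens_in_F[simp] = gens_in[OF s2]
lemmas elt_in_F[simp] = elt_in[OF s2]

abbreviation mulF (infixl "\<diamond>" 70) where "x \<diamond> y \<equiv> x \<otimes>\<^bsub>Gs s\<^esub> y"
abbreviation pwF (infixr "^^^" 75) where "x ^^^ n \<equiv> x [^]\<^bsub>Gs s\<^esub> (n::nat)"


lemma sg_in[simp]: "sg s k \<in> carrier (Gs s)" by (simp add: sg_def Gs_carrier)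

lemma sg_b: "k < 6 \<Longrightarrow> \<exists>k'<6. sg s k \<diamond> eb s = sg s k'"
  using sw_b[of k s] by (auto simp: sg_def eb_def elt_mult elt_eq_iff)
lemma sg_c: "k < 6 \<Longrightarrow> \<exists>k'<6. sg s k \<diamond> ec s = sg s k'"
  using sw_c[of k s] by (auto simp: sg_def ec_def elt_mult elt_eq_iff)

lemma conj_move: "g \<in> carrier (Gs s) \<Longrightarrow> g \<diamond> g = \<one>\<^bsub>Gs s\<^esub> \<Longrightarrow> x \<in> carrier (Gs s) \<Longrightarrow> y \<in> carrier (Gs s)
   \<Longrightarrow> x \<diamond> y \<diamond> g = (x \<diamond> g) \<diamond> (g \<diamond> y \<diamond> g)"
proof -
  assume g: "g \<in> carrier (Gs s)" "g \<diamond> g = \<one>\<^bsub>Gs s\<^esub>" and x: "x \<in> carrier (Gs s)" and y: "y \<in> carrier (Gs s)"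
  have gg: "g \<diamond> (g \<diamond> z) = z" if "z \<in> carrier (Gs s)" for z
    using g that by (simp add: G.m_assoc[symmetric])
  show ?thesis using g x y by (simp add: G.m_assoc gg)
qed


lemma Wu_b: "Z \<in> Wu s \<Longrightarrow> Z \<diamond> eb s \<in> Wu s"
proof -
  assume "Z \<in> Wu s"
  then obtain k i j where Z: "Z = sg s k \<diamond> tt s i j" "k < 6" by (auto simp: Wu_def)
  obtain k' where k': "k' < 6" "sg s k \<diamond> eb s = sg s k'" using sg_b[OF Z(2)] by blast
  have "Z \<diamond> eb s = sg s k' \<diamond> tt s j i"
    using conj_move[of "eb s" "sg s k" "tt s i j"] bb[OF s2] tt_b[OF s2] k' Z by simp
  then show ?thesis using k' by (auto simp: Wu_def)
qed

lemma Wu_c: "Z \<in> Wu s \<Longrightarrow> Z \<diamond> ec s \<in> Wu s"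
proof -
  assume "Z \<in> Wu s"
  then obtain k i j where Z: "Z = sg s k \<diamond> tt s i j" "k < 6" by (auto simp: Wu_def)
  obtain k' where k': "k' < 6" "sg s k \<diamond> ec s = sg s k'" using sg_c[OF Z(2)] by blast
  have "Z \<diamond> ec s = sg s k' \<diamond> tt s i ((s - 1) * i + (s - 1) * j)"
    using conj_move[of "ec s" "sg s k" "tt s i j"] cc[OF s2] tt_c[OF s2] k' Z by simp
  then show ?thesis using k' by (auto simp: Wu_def)
qed

lemma Wu_u: "Z \<in> Wu s \<Longrightarrow> Z \<diamond> u_elt s \<in> Wu s"
proof -
  assume "Z \<in> Wu s"
  then obtain k i j where Z: "Z = sg s k \<diamond> tt s i j" "k < 6" by (auto simp: Wu_def)
  have "Z \<diamond> u_elt s = sg s k \<diamond> tt s (Suc i) j"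
    using Z tt_u[OF s2] by (simp add: G.m_assoc)
  then show ?thesis using Z by (auto simp: Wu_def)
qed

lemma Wu_in: "Z \<in> Wu s \<Longrightarrow> Z \<in> carrier (Gs s)" by (auto simp: Wu_def)

lemma Wu_a: "Z \<in> Wu s \<Longrightarrow> Z \<diamond> ea s \<in> Wu s"
proof -
  assume Z: "Z \<in> Wu s"
  have "Z \<diamond> ea s = Z \<diamond> u_elt s \<diamond> eb s \<diamond> ec s \<diamond> eb s"
    using Z Wu_in by (simp add: a_eq[OF s2] G.m_assoc)
  then show ?thesis using Z by (simp add: Wu_b Wu_c Wu_u)
qed

lemma elt_Wu: "elt s w \<in> Wu s"
proof (induction w rule: rev_induct)
  case Nil
  have t0: "tt s 0 0 = \<one>\<^bsub>Gs s\<^esub>" unfolding tt_def by simp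
  have "elt s [] = sg s 0 \<diamond> tt s 0 0" by (simp add: t0 sg_def sw_def Gs_one elt_mult)
  then show ?case unfolding Wu_def by (intro CollectI exI[of _ 0] exI[of _ "0::nat"]) simp
next
  case (snoc g w)
  show ?case
  proof (cases g)
    case R0 then show ?thesis using Wu_a[OF snoc] by (simp add: ea_def elt_mult)
  next
    case R1 then show ?thesis using Wu_b[OF snoc] by (simp add: eb_def elt_mult)
  next
    case R2 then show ?thesis using Wu_c[OF snoc] by (simp add: ec_def elt_mult)
  qed
qed

lemma carrier_nf: "x \<in> carrier (Gs s) \<Longrightarrow> \<exists>k i j. k < 6 \<and> i < s \<and> j < s \<and> x = sg s k \<diamond> tt s i j"
proof -
  assume "x \<in> carrier (Gs s)"
  then obtain w where "x = elt s w" by (auto simp: Gs_carrier)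
  then obtain k i j where "k < 6" "x = sg s k \<diamond> tt s i j" using elt_Wu[of w] by (auto simp: Wu_def)
  moreover have "tt s i j = tt s (i mod s) (j mod s)" by (rule tt_mod[OF s2])
  ultimately have "x = sg s k \<diamond> tt s (i mod s) (j mod s)" by simp
  then show ?thesis using s2 \<open>k < 6\<close>
    by (intro exI[of _ k] exI[of _ "i mod s"] exI[of _ "j mod s"]) auto
qed

end


definition Phi :: "nat \<Rightarrow> gen list set \<Rightarrow> pt \<Rightarrow> pt" where
  "Phi s A = phi s (SOME w. w \<in> A)"

lemma Phi_elt: "Phi s (elt s w) = phi s w"
proof -
  have "w \<in> elt s w" by (simp add: elt_def wcong.refl)
  then have "(SOME w'. w' \<in> elt s w) \<in> elt s w" by (rule someI)
  then show ?thesis unfolding Phi_def elt_def by (simp add: phi_wcong)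
qed

fun pm :: "nat \<Rightarrow> pt \<Rightarrow> pt" where
  "pm k (x,y,z) = (if k = 0 then (x,y,z) else if k = 1 then (y,x,z) else if k = 2 then (x,z,y)
     else if k = 3 then (z,x,y) else if k = 4 then (y,z,x) else (z,y,x))"

definition Tr :: "nat \<Rightarrow> nat \<Rightarrow> nat \<Rightarrow> pt \<Rightarrow> pt" where
  "Tr s i j = (\<lambda>(x,y,z). ((x + int i) mod int s, (y + int j) mod int s, (z - int i - int j) mod int s))"

lemma phi_sw: "k < 6 \<Longrightarrow> phi s (sw k) = pm k \<circ> Mo s"
proof -
  assume "k < 6"
  then have "k = 0 \<or> k = 1 \<or> k = 2 \<or> k = 3 \<or> k = 4 \<or> k = 5" by auto
  then show ?thesis by (elim disjE) (auto simp: sw_def fun_eq_iff Mo_def)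
qed

lemma phi_vpow: "phi s (concat (replicate n vw)) =
   (\<lambda>(x,y,z). (x mod int s, (y + int n) mod int s, (z - int n) mod int s))"
proof (induction n)
  case 0 then show ?case by (simp add: Mo_def)
next
  case (Suc n) then show ?case by (auto simp: fun_eq_iff mod_simps algebra_simps vw_def)
qed

context fixes s :: nat assumes s2: "2 \<le> s"
begin

interpretation G: group "Gs s" by (rule group_Gs)
abbreviation mulG (infixl "\<diamond>" 70) where "x \<diamond> y \<equiv> x \<otimes>\<^bsub>Gs s\<^esub> y"
abbreviation pwG (infixr "^^^" 75) where "x ^^^ n \<equiv> x [^]\<^bsub>Gs s\<^esub> (n::nat)"

lemma Phi_mult: "x \<in> carrier (Gs s) \<Longrightarrow> y \<in> carrier (Gs s) \<Longrightarrow> Phi s (x \<diamond> y) = Phi s x \<circ> Phi s y"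
  by (auto simp: Gs_carrier elt_mult Phi_elt phi_append)

lemma Phi_tt: "Phi s (tt s i j) = Tr s i j"
proof -
  have "Phi s (tt s i j) = phi s (concat (replicate i uw)) \<circ> phi s (concat (replicate j vw))"
    unfolding tt_def u_elt_def vv_def elt_pow[OF s2] uw_def[symmetric]
    by (simp add: elt_mult Phi_elt phi_append)
  then show ?thesis
    by (simp add: phi_upow[folded uw_def] phi_vpow Tr_def fun_eq_iff mod_simps algebra_simps)
qed

lemma Phi_nf: "k < 6 \<Longrightarrow> Phi s (sg s k \<diamond> tt s i j) = pm k \<circ> Tr s i j"
proof -
  assume k: "k < 6"
  have "Phi s (sg s k \<diamond> tt s i j) = Phi s (sg s k) \<circ> Tr s i j"
    by (simp only: Phi_mult[OF sg_in[OF s2] tt_in[OF s2]] Phi_tt)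
  also have "Phi s (sg s k) = pm k \<circ> Mo s" by (simp add: sg_def Phi_elt phi_sw k)
  finally show ?thesis by (auto simp: fun_eq_iff Tr_def Mo_def)
qed

lemma nf_inj:
  assumes k: "k < 6" "k' < 6" and ij: "i < s" "j < s" "i' < s" "j' < s"
    and eq: "Phi s (sg s k \<diamond> tt s i j) = Phi s (sg s k' \<diamond> tt s i' j')"
  shows "k = k' \<and> i = i' \<and> j = j'"
proof -
  have e: "pm k (Tr s i j p) = pm k' (Tr s i' j' p)" for p
    using eq Phi_nf[OF k(1)] Phi_nf[OF k(2)] by (metis comp_apply)
  have m: "int a mod int s = int a" if "a < s" for a using that by simp
  have ne: "(1 + int a) mod int s \<noteq> int a" if "a < s" for a
  proof
    assume h: "(1 + int a) mod int s = int a"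
    show False
    proof (cases "a + 1 < s")
      case True then have "(1 + int a) mod int s = 1 + int a" by (simp add: add.commute)
      then show False using h by simp
    next
      case False then have "a + 1 = s" using that by simp
      then have "(1 + int a) mod int s = 0" by (metis of_nat_1 of_nat_add add.commute mod_self)
      then show False using h s2 \<open>a + 1 = s\<close> by simp
    qed
  qed
  note e0 = e[of "(0,0,0)"] and e1 = e[of "(1,0,0)"] and e2 = e[of "(0,1,0)"]
  have nei: "(1 + int i) mod int s \<noteq> int i" "(1 + int j) mod int s \<noteq> int j"
      "(1 + int i') mod int s \<noteq> int i'" "(1 + int j') mod int s \<noteq> int j'" using ne ij by auto
  have "k = 0 \<or> k = 1 \<or> k = 2 \<or> k = 3 \<or> k = 4 \<or> k = 5" using k by auto
  moreover have "k' = 0 \<or> k' = 1 \<or> k' = 2 \<or> k' = 3 \<or> k' = 4 \<or> k' = 5" using k by auto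
  ultimately have "k = k'"
    using e0 e1 e2 nei by (elim disjE) (simp_all add: Tr_def m ij)
  then show ?thesis using e0 k by (auto simp: Tr_def m ij split: if_splits)
qed

end


lemma w_aua: "wcong s ([R0] @ uw @ [R0]) (rev uw)"
  using del2[of s "[]" R0 "[R1,R2,R1,R0]"] by (simp add: uw_def)

context fixes s :: nat assumes s2: "2 \<le> s"
begin

interpretation G: group "Gs s" by (rule group_Gs)
abbreviation mulH (infixl "\<diamond>" 70) where "x \<diamond> y \<equiv> x \<otimes>\<^bsub>Gs s\<^esub> y"
abbreviation pwH (infixr "^^^" 75) where "x ^^^ n \<equiv> x [^]\<^bsub>Gs s\<^esub> (n::nat)"

lemmas gens_in_H[simp] = gens_in[OF s2]
lemmas elt_in_H[simp] = elt_in[OF s2]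

lemma aa: "ea s \<diamond> ea s = \<one>\<^bsub>Gs s\<^esub>" by (simp add: ea_def inv2[OF s2])

lemma inv_u: "inv\<^bsub>Gs s\<^esub> (u_elt s) = elt s (rev uw)"
  by (rule G.inv_equality) (simp_all add: u_elt_def uw_def[symmetric] elt_mult Gs_one elt_eq_iff wcong_rev)

lemma inv_u_pow: "inv\<^bsub>Gs s\<^esub> (u_elt s) = u_elt s ^^^ (s - 1)"
proof (rule G.inv_equality)
  show "u_elt s ^^^ (s - 1) \<diamond> u_elt s = \<one>\<^bsub>Gs s\<^esub>"
    using s2 us[OF s2] by (simp add: G.nat_pow_Suc[symmetric] del: G.nat_pow_Suc)
qed simp_all

lemma aua: "ea s \<diamond> u_elt s \<diamond> ea s = u_elt s ^^^ (s - 1)"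
  using w_aua[of s] by (simp only: inv_u_pow[symmetric] inv_u, simp add: ea_def u_elt_def uw_def elt_mult elt_eq_iff)

lemma a_upow: "ea s \<diamond> u_elt s ^^^ n = u_elt s ^^^ ((s - 1) * n) \<diamond> ea s"
proof -
  have "ea s \<diamond> u_elt s ^^^ n \<diamond> ea s = u_elt s ^^^ ((s - 1) * n)"
    by (simp add: G.conj_pow aa aua G.nat_pow_pow)
  then have "ea s \<diamond> u_elt s ^^^ n \<diamond> ea s \<diamond> ea s = u_elt s ^^^ ((s - 1) * n) \<diamond> ea s" by simp
  then show ?thesis by (simp add: G.m_assoc aa)
qed

lemma upow_add: "u_elt s ^^^ n \<diamond> u_elt s ^^^ m = u_elt s ^^^ (n + m)" by (simp add: G.nat_pow_mult)

lemma upow_mod: "u_elt s ^^^ n = u_elt s ^^^ (n mod s)" by (rule pow_mod[OF s2 _ us[OF s2]]) simp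


lemma refl_e2: "u_elt s ^^^ n \<diamond> ea s \<diamond> u_elt s ^^^ m = u_elt s ^^^ (n + (s - 1) * m) \<diamond> ea s"
    by (simp add: G.m_assoc a_upow) (simp add: G.m_assoc[symmetric] G.nat_pow_mult)
lemma refl_e3: "u_elt s ^^^ n \<diamond> ea s \<diamond> (u_elt s ^^^ m \<diamond> ea s) = u_elt s ^^^ (n + (s - 1) * m)"
    using refl_e2 by (simp add: G.m_assoc[symmetric]) (simp add: G.m_assoc aa)

end

definition Hall :: "nat \<Rightarrow> nat \<Rightarrow> gen list set set" where
  "Hall s d = {u_elt s [^]\<^bsub>Gs s\<^esub> n | n. d dvd n} \<union> {u_elt s [^]\<^bsub>Gs s\<^esub> n \<otimes>\<^bsub>Gs s\<^esub> ea s | n. d dvd n}"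

context fixes s d :: nat assumes s2: "2 \<le> s" and d0: "0 < d" and ds: "d dvd s"
begin

interpretation G: group "Gs s" by (rule group_Gs)
abbreviation mul2H (infixl "\<diamond>" 70) where "x \<diamond> y \<equiv> x \<otimes>\<^bsub>Gs s\<^esub> y"
abbreviation pw2H (infixr "^^^" 75) where "x ^^^ n \<equiv> x [^]\<^bsub>Gs s\<^esub> (n::nat)"
lemmas gens_in_H2[simp] = gens_in[OF s2]

lemma dvd_aux: "d dvd n \<Longrightarrow> d dvd m \<Longrightarrow> d dvd (n + (s - 1) * m)"
  by (simp add: dvd_mult)

lemma Hall_subgroup: "subgroup (Hall s d) (Gs s)"
proof (rule G.subgroupI)
  show "Hall s d \<subseteq> carrier (Gs s)" by (auto simp: Hall_def)
  show "Hall s d \<noteq> {}" by (auto simp: Hall_def)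
next
  fix x y assume x: "x \<in> Hall s d" and y: "y \<in> Hall s d"
  from x obtain n where n: "d dvd n" "x = u_elt s ^^^ n \<or> x = u_elt s ^^^ n \<diamond> ea s" by (auto simp: Hall_def)
  from y obtain m where m: "d dvd m" "y = u_elt s ^^^ m \<or> y = u_elt s ^^^ m \<diamond> ea s" by (auto simp: Hall_def)
  have e1: "u_elt s ^^^ n \<diamond> u_elt s ^^^ m = u_elt s ^^^ (n + m)" by (simp add: G.nat_pow_mult)
  have e2: "u_elt s ^^^ n \<diamond> ea s \<diamond> u_elt s ^^^ m = u_elt s ^^^ (n + (s - 1) * m) \<diamond> ea s"
    by (simp add: G.m_assoc a_upow[OF s2]) (simp add: G.m_assoc[symmetric] G.nat_pow_mult)
  have e3: "u_elt s ^^^ n \<diamond> ea s \<diamond> (u_elt s ^^^ m \<diamond> ea s) = u_elt s ^^^ (n + (s - 1) * m)"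
    using e2 by (simp add: G.m_assoc[symmetric]) (simp add: G.m_assoc aa[OF s2])
  have e4: "u_elt s ^^^ n \<diamond> (u_elt s ^^^ m \<diamond> ea s) = u_elt s ^^^ (n + m) \<diamond> ea s"
    by (simp add: G.m_assoc[symmetric] G.nat_pow_mult)
  show "x \<diamond> y \<in> Hall s d"
    using n m e1 e2 e3 e4 dvd_aux[of n m] by (auto simp: Hall_def)
next
  fix x assume x: "x \<in> Hall s d"
  from x obtain n where n: "d dvd n" "x = u_elt s ^^^ n \<or> x = u_elt s ^^^ n \<diamond> ea s" by (auto simp: Hall_def)
  have i1: "inv\<^bsub>Gs s\<^esub> (u_elt s ^^^ n) = u_elt s ^^^ ((s - 1) * n)"
    by (simp add: G.nat_pow_inv[symmetric] inv_u_pow[OF s2] G.nat_pow_pow)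
  have "u_elt s ^^^ n \<diamond> ea s \<diamond> (u_elt s ^^^ n \<diamond> ea s) = u_elt s ^^^ (n + (s - 1) * n)"
    by (rule refl_e3[OF s2])
  also have "n + (s - 1) * n = s * n" using s2 by (cases s) auto
  also have "u_elt s ^^^ (s * n) = \<one>\<^bsub>Gs s\<^esub>" by (simp add: G.nat_pow_pow[symmetric] us[OF s2])
  finally have i2: "inv\<^bsub>Gs s\<^esub> (u_elt s ^^^ n \<diamond> ea s) = u_elt s ^^^ n \<diamond> ea s"
    by (intro G.inv_equality) simp_all
  show "inv\<^bsub>Gs s\<^esub> x \<in> Hall s d"
    using n i1 i2 by (auto simp: Hall_def)
qed


lemma gen_eq: "generate (Gs s) {u_elt s ^^^ d, ea s} = Hall s d"
proof
  show "generate (Gs s) {u_elt s ^^^ d, ea s} \<subseteq> Hall s d"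
  proof (rule G.generate_subgroup_incl[OF _ Hall_subgroup])
    have "ea s = u_elt s ^^^ (0::nat) \<diamond> ea s" by simp
    then have "ea s \<in> Hall s d" unfolding Hall_def by (intro UnI2 CollectI exI[of _ 0]) simp
    moreover have "u_elt s ^^^ d \<in> Hall s d" unfolding Hall_def by (intro UnI1 CollectI exI[of _ d]) simp
    ultimately show "{u_elt s ^^^ d, ea s} \<subseteq> Hall s d" by simp
  qed
next
  have p: "u_elt s ^^^ (d * m) \<in> generate (Gs s) {u_elt s ^^^ d, ea s}" for m
  proof (induction m)
    case 0 then show ?case by (simp add: generate.one)
  next
    case (Suc m)
    have "u_elt s ^^^ (d * Suc m) = u_elt s ^^^ (d * m) \<diamond> u_elt s ^^^ d" by (simp add: G.nat_pow_mult add.commute)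
    moreover have "u_elt s ^^^ d \<in> generate (Gs s) {u_elt s ^^^ d, ea s}" by (rule generate.incl) simp
    ultimately show ?case using generate.eng[OF Suc] by simp
  qed
  show "Hall s d \<subseteq> generate (Gs s) {u_elt s ^^^ d, ea s}"
  proof
    fix x assume "x \<in> Hall s d"
    then obtain n where n: "d dvd n" "x = u_elt s ^^^ n \<or> x = u_elt s ^^^ n \<diamond> ea s"
      unfolding Hall_def by blast
    then obtain m where m: "n = d * m" by (auto elim: dvdE)
    have ag: "ea s \<in> generate (Gs s) {u_elt s ^^^ d, ea s}" by (rule generate.incl) simp
    have pm: "u_elt s ^^^ n \<in> generate (Gs s) {u_elt s ^^^ d, ea s}" using p[of m] m by simp
    show "x \<in> generate (Gs s) {u_elt s ^^^ d, ea s}"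
      using n(2)
    proof
      assume "x = u_elt s ^^^ n" then show ?thesis using pm by simp
    next
      assume "x = u_elt s ^^^ n \<diamond> ea s" then show ?thesis using generate.eng[OF pm ag] by simp
    qed
  qed
qed

lemma Phi_upow: "Phi s (u_elt s ^^^ n) = Tr s n 0"
proof -
  have "tt s n 0 = u_elt s ^^^ n" by (simp add: tt_def)
  then show ?thesis using Phi_tt[OF s2, of n 0] by simp
qed

lemma Phi_a: "Phi s (ea s) = F s R0"
  by (simp add: ea_def Phi_elt) (auto simp: fun_eq_iff Mo_def mod_simps)

lemma Phi_b: "Phi s (eb s) = F s R1"
  by (simp add: eb_def Phi_elt) (auto simp: fun_eq_iff Mo_def mod_simps)

lemma Phi_upow_a: "Phi s (u_elt s ^^^ n \<diamond> ea s) = Tr s n 0 \<circ> F s R0"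
  by (simp add: Phi_mult[OF s2] Phi_upow Phi_a)

lemma Hall_snd: "h \<in> Hall s d \<Longrightarrow> fst (snd (Phi s h (x, y, z))) = y mod int s"
  unfolding Hall_def
proof (elim UnE CollectE exE conjE)
  fix n assume "h = u_elt s ^^^ n" then show ?thesis by (simp add: Phi_upow Tr_def)
next
  fix n assume "h = u_elt s ^^^ n \<diamond> ea s" then show ?thesis by (simp add: Phi_upow_a Tr_def)
qed

end


context fixes s d :: nat assumes s2: "2 \<le> s" and d0: "0 < d" and ds: "d dvd s"
begin

interpretation G: group "Gs s" by (rule group_Gs)
abbreviation mul3I (infixl "\<diamond>" 70) where "x \<diamond> y \<equiv> x \<otimes>\<^bsub>Gs s\<^esub> y"
abbreviation pw3I (infixr "^^^" 75) where "x ^^^ n \<equiv> x [^]\<^bsub>Gs s\<^esub> (n::nat)"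
lemmas gens_in3_I[simp] = gens_in[OF s2]

lemma order_Gs: "order (Gs s) = 6 * s * s"
proof -
  let ?f = "\<lambda>(k,i,j). sg s k \<diamond> tt s i j"
  let ?D = "{..<6::nat} \<times> {..<s} \<times> {..<s}"
  have "carrier (Gs s) = ?f ` ?D"
  proof
    show "carrier (Gs s) \<subseteq> ?f ` ?D"
    proof
      fix x assume "x \<in> carrier (Gs s)"
      then obtain k i j where "k < 6" "i < s" "j < s" "x = sg s k \<diamond> tt s i j"
        using carrier_nf[OF s2] by blast
      then show "x \<in> ?f ` ?D" by (intro image_eqI[of _ _ "(k,i,j)"]) auto
    qed
    show "?f ` ?D \<subseteq> carrier (Gs s)" using sg_in[OF s2] tt_in[OF s2] by auto
  qed
  moreover have "inj_on ?f ?D"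
  proof (rule inj_onI)
    fix p q assume pq: "p \<in> ?D" "q \<in> ?D" "?f p = ?f q"
    obtain k i j where p: "p = (k,i,j)" by (cases p) auto
    obtain k' i' j' where q: "q = (k',i',j')" by (cases q) auto
    have "k = k' \<and> i = i' \<and> j = j'"
      by (rule nf_inj[OF s2]) (use pq p q in auto)
    then show "p = q" using p q by simp
  qed
  ultimately have "card (carrier (Gs s)) = card ?D" by (simp add: card_image)
  then show ?thesis by (simp add: order_def)
qed

lemma Tr0: "Tr s n 0 (0,0,0) = (int n mod int s, 0, (- int n) mod int s)"
  by (simp add: Tr_def)

lemma upow_inj: "n < s \<Longrightarrow> m < s \<Longrightarrow> u_elt s ^^^ n = u_elt s ^^^ m \<Longrightarrow> n = m"
proof -
  assume nm: "n < s" "m < s" "u_elt s ^^^ n = u_elt s ^^^ m"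
  then have "Phi s (u_elt s ^^^ n) (0,0,0) = Phi s (u_elt s ^^^ m) (0,0,0)" by simp
  then have "int n mod int s = int m mod int s" by (simp add: Phi_upow[OF s2 d0 ds] Tr0)
  then show "n = m" using nm by simp
qed

lemma upow_ne_refl: "u_elt s ^^^ n \<noteq> u_elt s ^^^ m \<diamond> ea s"
proof
  assume h: "u_elt s ^^^ n = u_elt s ^^^ m \<diamond> ea s"
  have e: "Tr s n 0 p = (Tr s m 0 \<circ> F s R0) p" for p
    using arg_cong[OF h, of "Phi s"] by (simp add: Phi_upow[OF s2 d0 ds] Phi_upow_a[OF s2 d0 ds])
  have e0: "int n mod int s = (1 + int m) mod int s"
    using e[of "(0,0,0)"] by (simp add: Tr_def mod_simps add.commute)
  have e1: "(1 + int n) mod int s = (1 + int m) mod int s"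
    using e[of "(1,0,0)"] by (simp add: Tr_def mod_simps add.commute)
  have "int s dvd (int n - (1 + int m))" using e0 by (simp add: mod_eq_dvd_iff)
  moreover have "int s dvd ((1 + int n) - (1 + int m))" using e1 by (simp add: mod_eq_dvd_iff)
  ultimately have "int s dvd ((1 + int n) - (1 + int m)) - (int n - (1 + int m))" by (rule dvd_diff[rotated])
  then have "int s dvd 1" by simp
  then show False using s2 by simp
qed

lemma card_Hall: "card (Hall s d) = 2 * (s div d)"
proof -
  define q where "q = s div d"
  have sq: "s = d * q" using ds by (simp add: q_def)
  let ?A = "(\<lambda>m. u_elt s ^^^ (d * m)) ` {..<q}"
  let ?B = "(\<lambda>m. u_elt s ^^^ (d * m) \<diamond> ea s) ` {..<q}"
  have red: "\<exists>m<q. u_elt s ^^^ n = u_elt s ^^^ (d * m)" if "d dvd n" for n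
  proof -
    have "d dvd n mod s" using that ds by (simp add: dvd_mod)
    then obtain m where m: "n mod s = d * m" by (auto elim: dvdE)
    have "d * m < d * q" using m sq s2 by (metis mod_less_divisor neq0_conv not_numeral_le_zero)
    then have "m < q" by simp
    then show ?thesis using m upow_mod[OF s2, of n] by auto
  qed
  have HAB: "Hall s d = ?A \<union> ?B"
  proof
    show "Hall s d \<subseteq> ?A \<union> ?B"
    proof
      fix x assume "x \<in> Hall s d"
      then obtain n where n: "d dvd n" "x = u_elt s ^^^ n \<or> x = u_elt s ^^^ n \<diamond> ea s"
        unfolding Hall_def by blast
      obtain m where "m < q" "u_elt s ^^^ n = u_elt s ^^^ (d * m)" using red[OF n(1)] by blast
      then show "x \<in> ?A \<union> ?B" using n(2) by auto
    qed
    show "?A \<union> ?B \<subseteq> Hall s d" unfolding Hall_def by auto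
  qed
  moreover have dm: "d * m < s" if "m < q" for m using that sq d0 by simp
  have injA: "inj_on (\<lambda>m. u_elt s ^^^ (d * m)) {..<q}"
  proof (rule inj_onI)
    fix m m' assume "m \<in> {..<q}" "m' \<in> {..<q}" "u_elt s ^^^ (d * m) = u_elt s ^^^ (d * m')"
    then have "d * m = d * m'" using upow_inj[OF dm dm] by simp
    then show "m = m'" using d0 by simp
  qed
  have injB: "inj_on (\<lambda>m. u_elt s ^^^ (d * m) \<diamond> ea s) {..<q}"
  proof (rule inj_onI)
    fix m m' assume "m \<in> {..<q}" "m' \<in> {..<q}" "u_elt s ^^^ (d * m) \<diamond> ea s = u_elt s ^^^ (d * m') \<diamond> ea s"
    then show "m = m'" using upow_inj[OF dm dm] d0 G.r_cancel by simp
  qed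
  have disj: "?A \<inter> ?B = {}" using upow_ne_refl by auto
  have "card (?A \<union> ?B) = card ?A + card ?B" by (rule card_Un_disjoint) (use disj in auto)
  also have "\<dots> = 2 * q" using injA injB by (simp add: card_image)
  finally show ?thesis using HAB by (simp add: q_def)
qed

end


context fixes s d :: nat assumes s2: "2 \<le> s" and d0: "0 < d" and ds: "d dvd s"
begin

interpretation G: group "Gs s" by (rule group_Gs)
abbreviation mul4J (infixl "\<diamond>" 70) where "x \<diamond> y \<equiv> x \<otimes>\<^bsub>Gs s\<^esub> y"
abbreviation pw4J (infixr "^^^" 75) where "x ^^^ n \<equiv> x [^]\<^bsub>Gs s\<^esub> (n::nat)"
lemmas gens_in4_J[simp] = gens_in[OF s2]

lemma inv_self: "g \<in> carrier (Gs s) \<Longrightarrow> g \<diamond> g = \<one>\<^bsub>Gs s\<^esub> \<Longrightarrow> inv\<^bsub>Gs s\<^esub> g = g"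
  by (rule G.inv_equality) auto

lemma core_free_Hall: "core_free (Gs s) (Hall s d)"
  unfolding core_free_def
proof (intro allI impI, elim conjE)
  fix N assume nN: "N \<lhd> Gs s" and NH: "N \<subseteq> Hall s d"
  interpret N: normal N "Gs s" by (rule nN)
  have conjN: "g \<diamond> n \<diamond> g \<in> Hall s d" if "n \<in> N" "g \<in> carrier (Gs s)" "g \<diamond> g = \<one>\<^bsub>Gs s\<^esub>" for g n
    using N.inv_op_closed2[OF that(2,1)] inv_self[OF that(2,3)] NH by auto
  show "N = {\<one>\<^bsub>Gs s\<^esub>}"
  proof
    show "{\<one>\<^bsub>Gs s\<^esub>} \<subseteq> N" by simp
  next
    show "N \<subseteq> {\<one>\<^bsub>Gs s\<^esub>}"
    proof
      fix n assume nN': "n \<in> N"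
      then have "n \<in> Hall s d" using NH by auto
      then obtain t where t: "n = u_elt s ^^^ t \<or> n = u_elt s ^^^ t \<diamond> ea s"
        unfolding Hall_def by blast
      then show "n \<in> {\<one>\<^bsub>Gs s\<^esub>}"
      proof
        assume n: "n = u_elt s ^^^ t"
        define t' where "t' = t mod s"
        have t's: "t' < s" using s2 by (simp add: t'_def)
        have n': "n = tt s t' 0" using n upow_mod[OF s2, of t] by (simp add: tt_def t'_def)
        have "ec s \<diamond> n \<diamond> ec s = tt s t' ((s - 1) * t')"
          using tt_c[OF s2, of t' 0] n' by simp
        moreover have "ec s \<diamond> n \<diamond> ec s \<in> Hall s d" using conjN[OF nN'] cc[OF s2] by simp
        ultimately have "fst (snd (Phi s (tt s t' ((s - 1) * t')) (0,0,0))) = 0 mod int s"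
          using Hall_snd[OF s2 d0 ds] by metis
        then have "int ((s - 1) * t') mod int s = 0" by (simp add: Phi_tt[OF s2] Tr_def)
        then have "s dvd (s - 1) * t'" by (metis of_nat_0 of_nat_dvd_iff mod_0_imp_dvd zmod_int)
        moreover have "(s - 1) * t' + t' = s * t'" using s2 by (cases s) auto
        ultimately have "s dvd t'" by (metis dvd_add_right_iff dvd_triv_left)
        then have "t' = 0" using t's by (metis dvd_imp_le neq0_conv not_le)
        then have "n = \<one>\<^bsub>Gs s\<^esub>" using n' by (simp add: tt_def)
        then show ?thesis by simp
      next
        assume n: "n = u_elt s ^^^ t \<diamond> ea s"
        have P: "Phi s (eb s \<diamond> n \<diamond> eb s) = F s R1 \<circ> (Tr s t 0 \<circ> F s R0) \<circ> F s R1"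
          using n by (simp add: Phi_mult[OF s2] Phi_upow_a[OF s2 d0 ds] Phi_b[OF s2 d0 ds])
        have inH: "eb s \<diamond> n \<diamond> eb s \<in> Hall s d" using conjN[OF nN'] bb[OF s2] by simp
        have e0: "fst (snd (Phi s (eb s \<diamond> n \<diamond> eb s) (0,0,0))) = 0 mod int s"
          using Hall_snd[OF s2 d0 ds inH] by blast
        have e1: "fst (snd (Phi s (eb s \<diamond> n \<diamond> eb s) (0,1,0))) = 1 mod int s"
          using Hall_snd[OF s2 d0 ds inH] by blast
        have "(1 + int t) mod int s = 0" using e0 unfolding P by (simp add: Tr_def mod_simps add.commute)
        moreover have "(1 + int t) mod int s = 1" using e1 s2 unfolding P by (simp add: Tr_def mod_simps add.commute)
        ultimately show ?thesis by simp
      qed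
    qed
  qed
qed

end


lemma (in group) coset_rep:
  fixes H :: "'a set" and n :: nat
  assumes HG: "subgroup H G" and cf: "core_free G H" and fin: "finite (rcosets H)"
    and cn: "card (rcosets H) = n"
  shows "faithful_transitive_rep G {..<n}"
proof -
  let ?R = "rcosets H"
  let ?S = "{..<n}"
  have Hc: "H \<subseteq> carrier G" using HG subgroup.subset by blast
  obtain \<beta> where b: "bij_betw \<beta> {0..<card ?R} ?R" using ex_bij_betw_nat_finite[OF fin] by blast
  then have bS: "bij_betw \<beta> ?S ?R" using cn by (simp add: atLeast0LessThan)
  define \<gamma> where "\<gamma> = inv_into ?S \<beta>"
  have g1: "\<gamma> (\<beta> i) = i" if "i \<in> ?S" for i
    using bS that by (simp add: \<gamma>_def bij_betw_inv_into_left)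
  have g2: "\<beta> (\<gamma> Y) = Y" if "Y \<in> ?R" for Y
    using bS that by (simp add: \<gamma>_def bij_betw_inv_into_right)
  have g3: "\<gamma> Y \<in> ?S" if "Y \<in> ?R" for Y
    using bS that unfolding \<gamma>_def by (metis bij_betw_def inv_into_into)
  have bR: "\<beta> i \<in> ?R" if "i \<in> ?S" for i using bS that bij_betwE by blast
  have Rsub: "Y \<subseteq> carrier G" if "Y \<in> ?R" for Y
    using that Hc by (auto simp: RCOSETS_def r_coset_def)
  have Rmul: "Y #> a \<in> ?R" if Y: "Y \<in> ?R" and a: "a \<in> carrier G" for Y a
  proof -
    obtain x where x: "x \<in> carrier G" "Y = H #> x" using Y by (auto simp: RCOSETS_def)
    then have "Y #> a = H #> (x \<otimes> a)" using coset_mult_assoc[OF Hc x(1) a] by simp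
    then show ?thesis using x a Hc by (simp add: rcosetsI)
  qed
  define f where "f g = (\<lambda>i\<in>?S. \<gamma> (\<beta> i #> inv g))" for g
  have fS: "f g i \<in> ?S" if "i \<in> ?S" "g \<in> carrier G" for g i
    using g3[OF Rmul[OF bR[OF that(1)] inv_closed[OF that(2)]]] that by (simp add: f_def)
  have fcomp: "f g (f h i) = f (g \<otimes> h) i" if "i \<in> ?S" "g \<in> carrier G" "h \<in> carrier G" for g h i
  proof -
    have R1: "\<beta> i #> inv h \<in> ?R" using Rmul[OF bR[OF that(1)] inv_closed[OF that(3)]] .
    have "f h i \<in> ?S" using fS that by simp
    then have "f g (f h i) = \<gamma> (\<beta> (f h i) #> inv g)" by (simp add: f_def)
    also have "\<beta> (f h i) = \<beta> i #> inv h" using that R1 by (simp add: f_def g2)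
    finally have "f g (f h i) = \<gamma> (\<beta> i #> inv h #> inv g)" .
    also have "\<beta> i #> inv h #> inv g = \<beta> i #> inv (g \<otimes> h)"
      using that by (simp add: coset_mult_assoc Rsub bR inv_mult_group)
    finally have "f g (f h i) = \<gamma> (\<beta> i #> inv (g \<otimes> h))" .
    moreover have "f (g \<otimes> h) i = \<gamma> (\<beta> i #> inv (g \<otimes> h))" using that(1) by (simp add: f_def)
    ultimately show ?thesis by simp
  qed
  have fone: "f \<one> i = i" if "i \<in> ?S" for i
    using that by (simp add: f_def g1 Rsub bR)
  have fBij: "f g \<in> Bij ?S" if g: "g \<in> carrier G" for g
  proof -
    have "bij_betw (f g) ?S ?S"
    proof (rule bij_betw_byWitness[where f' = "f (inv g)"])
      show "\<forall>a\<in>?S. f (inv g) (f g a) = a" using g by (simp add: fcomp fone)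
      show "\<forall>a\<in>?S. f g (f (inv g) a) = a" using g by (simp add: fcomp fone)
      show "f g ` ?S \<subseteq> ?S" using g fS by auto
      show "f (inv g) ` ?S \<subseteq> ?S" using g fS by auto
    qed
    then show ?thesis by (simp add: Bij_def f_def)
  qed
  have hom: "f \<in> hom G (BijGroup ?S)"
  proof (rule homI)
    fix g assume "g \<in> carrier G" then show "f g \<in> carrier (BijGroup ?S)" by (simp add: BijGroup_def fBij)
  next
    fix g h assume gh: "g \<in> carrier G" "h \<in> carrier G"
    have "f (g \<otimes> h) = compose ?S (f g) (f h)"
    proof (rule ext)
      fix x show "f (g \<otimes> h) x = compose ?S (f g) (f h) x"
      proof (cases "x \<in> ?S")
        case True then show ?thesis using fcomp[OF True gh] by (simp add: compose_def)
      next
        case False then show ?thesis by (simp add: compose_def f_def)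
      qed
    qed
    then show "f (g \<otimes> h) = f g \<otimes>\<^bsub>BijGroup ?S\<^esub> f h" using gh by (simp add: BijGroup_def fBij)
  qed
  interpret GH: group_hom G "BijGroup ?S" f
    by (rule group_hom.intro[OF is_group group_BijGroup]) (simp add: group_hom_axioms_def hom)
  have ker_sub: "kernel G (BijGroup ?S) f \<subseteq> H"
  proof
    fix g assume "g \<in> kernel G (BijGroup ?S) f"
    then have g: "g \<in> carrier G" "f g = (\<lambda>x\<in>?S. x)" by (auto simp: kernel_def BijGroup_def)
    have HR: "H \<in> ?R" using rcosetsI[OF Hc one_closed] Hc by simp
    define i where "i = \<gamma> H"
    have i: "i \<in> ?S" "\<beta> i = H" using g3[OF HR] g2[OF HR] by (simp_all add: i_def)
    have "\<gamma> (H #> inv g) = i" using g(2) i by (metis f_def restrict_apply')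
    then have "\<beta> (\<gamma> (H #> inv g)) = H" using i by simp
    then have "H #> inv g = H" using g2 Rmul[OF HR] g(1) by simp
    moreover have "inv g \<in> H #> inv g" using rcos_self[OF _ HG] g(1) by simp
    ultimately have "inv g \<in> H" by simp
    then show "g \<in> H" using HG g(1) by (metis inv_inv subgroup.m_inv_closed)
  qed
  have "kernel G (BijGroup ?S) f = {\<one>}"
    using cf ker_sub GH.normal_kernel unfolding core_free_def by blast
  then have inj: "inj_on f (carrier G)" using GH.inj_iff_trivial_ker by simp
  have trans: "\<forall>x\<in>?S. \<forall>y\<in>?S. \<exists>g\<in>carrier G. f g x = y"
  proof (intro ballI)
    fix i j assume ij: "i \<in> ?S" "j \<in> ?S"
    obtain x where x: "x \<in> carrier G" "\<beta> i = H #> x" using bR[OF ij(1)] by (auto simp: RCOSETS_def)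
    obtain y where y: "y \<in> carrier G" "\<beta> j = H #> y" using bR[OF ij(2)] by (auto simp: RCOSETS_def)
    let ?g = "inv (inv x \<otimes> y)"
    have "\<beta> i #> inv ?g = H #> (x \<otimes> (inv x \<otimes> y))"
      using x y Hc by (simp add: coset_mult_assoc)
    also have "\<dots> = \<beta> j" using x y by (simp add: m_assoc[symmetric])
    finally have "f ?g i = j" using ij by (simp add: f_def g1)
    then show "\<exists>g\<in>carrier G. f g i = j" using x y by (intro bexI[of _ ?g]) auto
  qed
  show ?thesis unfolding faithful_transitive_rep_def using hom inj trans by blast
qed


theorem mainTheorem7:
  fixes s d :: nat
  assumes "s \<ge> 2" and "d > 0" and "d dvd s"
  defines "H \<equiv> generate (Gs s) {u_elt s [^]\<^bsub>Gs s\<^esub> d, elt s [R0]}"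
  shows "subgroup H (Gs s)
         \<and> core_free (Gs s) H
         \<and> card (rcosets\<^bsub>Gs s\<^esub> H) = 3 * d * s
         \<and> faithful_transitive_rep (Gs s) {..<3 * d * s}"
proof -
  interpret G: group "Gs s" by (rule group_Gs)
  have HH: "H = Hall s d" using gen_eq[OF assms(1-3)] by (simp add: H_def ea_def)
  have sg: "subgroup H (Gs s)" using Hall_subgroup[OF assms(1-3)] HH by simp
  have cf: "core_free (Gs s) H" using core_free_Hall[OF assms(1-3)] HH by simp
  define q where "q = s div d"
  have sq: "s = d * q" using assms(3) by (simp add: q_def)
  have q0: "q > 0" using sq assms(1) by (cases q) auto
  have "card (rcosets\<^bsub>Gs s\<^esub> H) * card H = order (Gs s)" by (rule G.lagrange[OF sg])
  then have "card (rcosets\<^bsub>Gs s\<^esub> H) * (2 * q) = 6 * s * s"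
    using card_Hall[OF assms(1-3)] order_Gs[OF assms(1-3)] HH by (simp add: q_def)
  then have "card (rcosets\<^bsub>Gs s\<^esub> H) * (2 * q) = (3 * d * s) * (2 * q)" using sq by (simp add: algebra_simps)
  then have cR: "card (rcosets\<^bsub>Gs s\<^esub> H) = 3 * d * s" using q0 by simp
  have fin: "finite (carrier (Gs s))" using order_Gs[OF assms(1-3)] assms(1)
    by (metis card.infinite mult_is_0 not_numeral_le_zero order_def zero_neq_numeral)
  have "rcosets\<^bsub>Gs s\<^esub> H \<subseteq> Pow (carrier (Gs s))"
    using sg subgroup.subset by (auto simp: RCOSETS_def r_coset_def)
  then have finR: "finite (rcosets\<^bsub>Gs s\<^esub> H)" using fin by (meson finite_Pow_iff finite_subset)
  have "faithful_transitive_rep (Gs s) {..<3 * d * s}" by (rule G.coset_rep[OF sg cf finR cR])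
  then show ?thesis using sg cf cR by blast
qed


end
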